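(* Fix $m\ge 0$. Work with smooth functions $\psi(u_0,u_1,\dots,u_N)$ of finitely many variables on domains with $u_0>0$, and let $D=\sum_{k\ge 0}u_{k+1}\frac{\partial}{\partial u_k}$ be the total derivative (so that, along $u_k=q^{(k)}(x)$, $D$ acts as $\frac{d}{dx}$). Define operators $$E=\sum_j u_j\frac{\partial}{\partial u_j},\qquad \Lambda=\sum_j(-1)^{j+1}D^j\frac{\partial}{\partial u_j},\qquad L=\sum_j(-1)^jD^j\Big(u_0\frac{\partial}{\partial u_j}\,\cdot\Big).$$ Let $\phi=\phi(u_0,\dots,u_m)$ be smooth with $E\phi=\phi$, i.e. $\phi=\sum_{j=0}^m u_j\frac{\partial\phi}{\partial u_j}$, and let $$S=\Lambda\phi=\sum_{j=0}^m(-1)^{j+1}D^j\frac{\partial\phi}{\partial u_j},$$ a function of $(u_0,\dots,u_{2m})$. Then $$LS=\sum_{j=0}^{2m}(-1)^jD^j\Big(u_0\frac{\partial S}{\partial u_j}\Big)=0 .$$ *)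

theory Defs
  imports "HOL-Analysis.Analysis"
begin

text \<open>Jet variables: a point is u :: nat \<Rightarrow> real, with u k the coordinate u_k.
  Functions psi(u_0,...,u_N) are modelled as (nat \<Rightarrow> real) \<Rightarrow> real.\<close>

type_synonym jetfun = "(nat \<Rightarrow> real) \<Rightarrow> real"

definition pd :: "nat \<Rightarrow> jetfun \<Rightarrow> jetfun" where
  "pd j \<psi> = (\<lambda>u. deriv (\<lambda>t. \<psi> (u(j := t))) (u j))"

definition pds :: "nat list \<Rightarrow> jetfun \<Rightarrow> jetfun" where
  "pds js \<psi> = foldr pd js \<psi>"

definition smooth_on_jet :: "(nat \<Rightarrow> real) set \<Rightarrow> jetfun \<Rightarrow> bool" where
  "smooth_on_jet U \<psi> \<longleftrightarrow>
     (\<forall>js. continuous_on U (pds js \<psi>) \<and>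
        (\<forall>j. \<forall>u\<in>U. (\<lambda>t. pds js \<psi> (u(j := t))) differentiable (at (u j))))"

definition Dtot :: "jetfun \<Rightarrow> jetfun" where
  "Dtot \<psi> = (\<lambda>u. \<Sum>k. u (Suc k) * pd k \<psi> u)"

definition Eop :: "jetfun \<Rightarrow> jetfun" where
  "Eop \<psi> = (\<lambda>u. \<Sum>j. u j * pd j \<psi> u)"

definition Lambda_op :: "jetfun \<Rightarrow> jetfun" where
  "Lambda_op \<psi> = (\<lambda>u. \<Sum>j. (-1::real) ^ (j + 1) * (Dtot ^^ j) (pd j \<psi>) u)"

definition Lop :: "jetfun \<Rightarrow> jetfun" where
  "Lop \<psi> = (\<lambda>u. \<Sum>j. (-1::real) ^ j * (Dtot ^^ j) (\<lambda>v. v 0 * pd j \<psi> v) u)"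

end

theory Submission
  imports Defs
begin

locale jet =
  fixes U :: "(nat \<Rightarrow> real) set" and m :: nat
  assumes opn: "open U"
    and inv: "\<And>u v. (\<forall>k\<le>m. u k = v k) \<Longrightarrow> (u \<in> U \<longleftrightarrow> v \<in> U)"
begin

definition eqU :: "jetfun \<Rightarrow> jetfun \<Rightarrow> bool" where
  "eqU f g \<longleftrightarrow> (\<forall>u\<in>U. f u = g u)"

lemma eqU_refl[simp]: "eqU f f" by (simp add: eqU_def)
lemma eqU_sym: "eqU f g \<Longrightarrow> eqU g f" by (simp add: eqU_def)
lemma eqU_trans: "eqU f g \<Longrightarrow> eqU g h \<Longrightarrow> eqU f h" by (simp add: eqU_def)

lemma cont_upd: "continuous_on UNIV (\<lambda>t::real. v(j:=t))"
  apply (intro continuous_on_coordinatewise_then_product)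
  subgoal for i by (cases "i = j") (auto intro: continuous_on_id continuous_on_const)
  done

lemma loc: assumes "v(j:=s) \<in> U" shows "eventually (\<lambda>t. v(j:=t) \<in> U) (nhds s)"
proof -
  have "open ((\<lambda>t::real. v(j:=t)) -` U \<inter> UNIV)"
    using iffD1[OF continuous_on_open_vimage[OF open_UNIV] cont_upd, rule_format, OF opn] by simp
  then have "eventually (\<lambda>t. t \<in> (\<lambda>t::real. v(j:=t)) -` U \<inter> UNIV) (nhds s)"
    by (rule eventually_nhds_in_open) (use assms in auto)
  then show ?thesis by simp
qed

lemma loc': "u \<in> U \<Longrightarrow> eventually (\<lambda>t. u(j:=t) \<in> U) (nhds (u j))"
  using loc[of u j "u j"] by simp

lemma pd_cong: assumes "eqU f g" shows "eqU (pd j f) (pd j g)"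
  unfolding eqU_def pd_def
proof
  fix u assume u: "u \<in> U"
  show "deriv (\<lambda>t. f (u(j := t))) (u j) = deriv (\<lambda>t. g (u(j := t))) (u j)"
    by (rule deriv_cong_ev[OF eventually_mono[OF loc'[OF u]]]) (use assms in \<open>auto simp: eqU_def\<close>)
qed

lemma pds_cong: "eqU f g \<Longrightarrow> eqU (pds js f) (pds js g)"
  by (induction js) (auto simp: pds_def pd_cong)

lemma pds_append: "pds (js @ [k]) f = pds js (pd k f)"
  by (simp add: pds_def)

definition ldiff :: "jetfun \<Rightarrow> bool" where
  "ldiff f \<longleftrightarrow> (\<forall>j. \<forall>u\<in>U. (\<lambda>t. f (u(j := t))) differentiable (at (u j)))"

definition basic :: "jetfun \<Rightarrow> bool" where
  "basic f \<longleftrightarrow> continuous_on U f \<and> ldiff f"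

lemma smooth_iff: "smooth_on_jet U f \<longleftrightarrow> (\<forall>js. basic (pds js f))"
  by (simp add: smooth_on_jet_def basic_def ldiff_def)

lemma ldiff_DERIV: assumes "ldiff f" "v(j:=s) \<in> U"
  shows "DERIV (\<lambda>t. f (v(j:=t))) s :> pd j f (v(j:=s))"
proof -
  have "(\<lambda>t. f ((v(j:=s))(j := t))) differentiable (at ((v(j:=s)) j))"
    using assms unfolding ldiff_def by blast
  then show ?thesis unfolding pd_def
    by (simp add: DERIV_deriv_iff_real_differentiable[symmetric])
qed

lemma ldiff_DERIV': "ldiff f \<Longrightarrow> u \<in> U \<Longrightarrow> DERIV (\<lambda>t. f (u(j:=t))) (u j) :> pd j f u"
  using ldiff_DERIV[of f u j "u j"] by simp

lemma ldiff_cong: assumes "eqU f g" "ldiff f" shows "ldiff g"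
  unfolding ldiff_def
proof (intro allI ballI)
  fix j u assume u: "u \<in> U"
  have der: "DERIV (\<lambda>t. f (u(j:=t))) (u j) :> pd j f u" using ldiff_DERIV'[OF assms(2) u] .
  have ev: "eventually (\<lambda>t. f (u(j:=t)) = g (u(j:=t))) (nhds (u j))"
    by (rule eventually_mono[OF loc'[OF u]]) (use assms in \<open>auto simp: eqU_def\<close>)
  have "DERIV (\<lambda>t. g (u(j:=t))) (u j) :> pd j f u"
    using iffD1[OF DERIV_cong_ev[OF refl ev refl] der] .
  then show "(\<lambda>t. g (u(j := t))) differentiable at (u j)"
    unfolding real_differentiable_def by (rule exI)
qed

lemma basic_cong: assumes "eqU f g" "basic f" shows "basic g"
proof -
  have "continuous_on U g"
    using continuous_on_cong[of U U f g] assms by (auto simp: eqU_def basic_def)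
  moreover have "ldiff g" using ldiff_cong assms basic_def by blast
  ultimately show ?thesis by (simp add: basic_def)
qed

lemma smooth_cong: assumes "eqU f g" "smooth_on_jet U f" shows "smooth_on_jet U g"
  unfolding smooth_iff
proof
  fix js
  show "basic (pds js g)"
    using basic_cong[OF pds_cong[OF assms(1)]] assms(2) unfolding smooth_iff by blast
qed

lemma smooth_pd: "smooth_on_jet U f \<Longrightarrow> smooth_on_jet U (pd k f)"
  unfolding smooth_iff by (simp add: pds_append[symmetric])

lemma smooth_basic: "smooth_on_jet U f \<Longrightarrow> basic f"
  unfolding smooth_iff by (drule spec[of _ "[]"]) (simp add: pds_def)

lemma coind:
  assumes "\<And>f. f \<in> P \<Longrightarrow> basic f" "\<And>f k. f \<in> P \<Longrightarrow> \<exists>g\<in>P. eqU (pd k f) g" "f \<in> P"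
  shows "smooth_on_jet U f"
proof -
  have "\<forall>f\<in>P. basic (pds js f)" for js
  proof (induction js rule: rev_induct)
    case Nil then show ?case using assms(1) by (simp add: pds_def)
  next
    case (snoc k js)
    show ?case
    proof
      fix f assume "f \<in> P"
      then obtain g where g: "g \<in> P" "eqU (pd k f) g" using assms(2) by blast
      have "eqU (pds js g) (pds js (pd k f))" by (rule pds_cong[OF eqU_sym[OF g(2)]])
      moreover have "basic (pds js g)" using snoc g(1) by blast
      ultimately show "basic (pds (js @ [k]) f)" unfolding pds_append using basic_cong by blast
    qed
  qed
  then show ?thesis using assms(3) smooth_iff by blast
qed


lemma pd_eqI: assumes "\<And>u. u \<in> U \<Longrightarrow> DERIV (\<lambda>t. h (u(k:=t))) (u k) :> H u"
  shows "eqU (pd k h) H"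
  unfolding eqU_def pd_def using assms DERIV_imp_deriv by blast

lemma ldiffI: assumes "\<And>j u. u \<in> U \<Longrightarrow> DERIV (\<lambda>t. h (u(j:=t))) (u j) :> H j u"
  shows "ldiff h"
  unfolding ldiff_def real_differentiable_def using assms by blast

lemma pd_const[simp]: "pd k (\<lambda>v. c) = (\<lambda>v. 0)"
  unfolding pd_def by (simp add: DERIV_imp_deriv)

lemma pd_coord: "pd k (\<lambda>v. v i) = (\<lambda>v. if k = i then 1 else 0)"
proof
  fix u :: "nat \<Rightarrow> real"
  show "pd k (\<lambda>v. v i) u = (if k = i then 1 else 0)"
  proof (cases "k = i")
    case True
    then show ?thesis unfolding pd_def by (simp add: DERIV_imp_deriv)
  next
    case False
    then show ?thesis unfolding pd_def by (simp add: DERIV_imp_deriv)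
  qed
qed

lemma ldiff_const: "ldiff (\<lambda>v. c)"
  by (rule ldiffI[where H="\<lambda>j u. 0"]) simp

lemma ldiff_coord: "ldiff (\<lambda>v. v i)"
proof (rule ldiffI[where H="\<lambda>j u. if j = i then 1 else 0"])
  fix j u
  show "DERIV (\<lambda>t. (u(j:=t)) i) (u j) :> (if j = i then 1 else 0)"
    by (cases "j = i") simp_all
qed

lemma ldiff_add: "ldiff f \<Longrightarrow> ldiff g \<Longrightarrow> ldiff (\<lambda>v. f v + g v)"
  by (rule ldiffI[where H="\<lambda>j u. pd j f u + pd j g u"]) (intro DERIV_add ldiff_DERIV')
lemma ldiff_diff: "ldiff f \<Longrightarrow> ldiff g \<Longrightarrow> ldiff (\<lambda>v. f v - g v)"
  by (rule ldiffI[where H="\<lambda>j u. pd j f u - pd j g u"]) (intro DERIV_diff ldiff_DERIV')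
lemma ldiff_mult: assumes "ldiff f" "ldiff g" shows "ldiff (\<lambda>v. f v * g v)"
proof (rule ldiffI[where H="\<lambda>j u. pd j f u * g u + pd j g u * f u"])
  fix j u assume u: "u \<in> U"
  have "DERIV (\<lambda>t. f (u(j:=t)) * g (u(j:=t))) (u j) :> pd j f u * g (u(j:=u j)) + pd j g u * f (u(j:=u j))"
    by (rule DERIV_mult) (intro ldiff_DERIV' assms u)+
  then show "DERIV (\<lambda>t. f (u(j:=t)) * g (u(j:=t))) (u j) :> pd j f u * g u + pd j g u * f u"
    by simp
qed

lemma pd_add: "ldiff f \<Longrightarrow> ldiff g \<Longrightarrow> eqU (pd k (\<lambda>v. f v + g v)) (\<lambda>v. pd k f v + pd k g v)"
  by (rule pd_eqI) (intro DERIV_add ldiff_DERIV')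
lemma pd_diff: "ldiff f \<Longrightarrow> ldiff g \<Longrightarrow> eqU (pd k (\<lambda>v. f v - g v)) (\<lambda>v. pd k f v - pd k g v)"
  by (rule pd_eqI) (intro DERIV_diff ldiff_DERIV')
lemma pd_cmult: "ldiff f \<Longrightarrow> eqU (pd k (\<lambda>v. c * f v)) (\<lambda>v. c * pd k f v)"
  by (rule pd_eqI) (intro DERIV_cmult ldiff_DERIV')
lemma pd_mult: assumes "ldiff f" "ldiff g"
  shows "eqU (pd k (\<lambda>v. f v * g v)) (\<lambda>v. pd k f v * g v + f v * pd k g v)"
proof (rule pd_eqI)
  fix u assume u: "u \<in> U"
  have "DERIV (\<lambda>t. f (u(k:=t)) * g (u(k:=t))) (u k) :> pd k f u * g (u(k:=u k)) + pd k g u * f (u(k:=u k))"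
    by (rule DERIV_mult) (intro ldiff_DERIV' assms u)+
  then show "DERIV (\<lambda>t. f (u(k:=t)) * g (u(k:=t))) (u k) :> pd k f u * g u + f u * pd k g u"
    by (simp add: algebra_simps)
qed
lemma pd_sum: assumes "finite A" "\<And>i. i \<in> A \<Longrightarrow> ldiff (F i)"
  shows "eqU (pd k (\<lambda>v. \<Sum>i\<in>A. F i v)) (\<lambda>v. \<Sum>i\<in>A. pd k (F i) v)"
proof (rule pd_eqI)
  fix u assume u: "u \<in> U"
  show "DERIV (\<lambda>t. \<Sum>i\<in>A. F i (u(k:=t))) (u k) :> (\<Sum>i\<in>A. pd k (F i) u)"
    by (rule DERIV_sum) (intro ldiff_DERIV' assms u)
qed
lemma ldiff_sum: assumes "\<And>i. i \<in> A \<Longrightarrow> ldiff (F i)"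
  shows "ldiff (\<lambda>v. \<Sum>i\<in>A. F i v)"
  by (rule ldiffI[where H="\<lambda>j u. \<Sum>i\<in>A. pd j (F i) u"]) (rule DERIV_sum, intro ldiff_DERIV' assms)


lemma basic_const: "basic (\<lambda>v. c)"
  by (simp add: basic_def ldiff_const)

lemma range_const: "(\<lambda>v::nat\<Rightarrow>real. c) \<in> range (\<lambda>c v. c)"
  by (rule image_eqI[where x=c]) auto

lemma smooth_const: "smooth_on_jet U (\<lambda>v. c)"
proof (rule coind[where P="range (\<lambda>c v. c)"])
  fix f assume "f \<in> range (\<lambda>(c::real) (v::nat\<Rightarrow>real). c)"
  then show "basic f" by (auto simp: basic_const)
next
  fix f k assume "f \<in> range (\<lambda>(c::real) (v::nat\<Rightarrow>real). c)"
  then obtain c where "f = (\<lambda>v. c)" by auto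
  then show "\<exists>g\<in>range (\<lambda>c v. c). eqU (pd k f) g"
    by (intro bexI[of _ "\<lambda>v. 0"] range_const) simp
qed (rule range_const)

lemma smooth_coord: "smooth_on_jet U (\<lambda>v. v i)"
proof (rule coind[where P="insert (\<lambda>v. v i) (range (\<lambda>c v. c))"])
  fix f assume "f \<in> insert (\<lambda>v::nat\<Rightarrow>real. v i) (range (\<lambda>c v. c))"
  then show "basic f"
    by (auto simp: basic_const basic_def ldiff_coord ldiff_const intro: continuous_on_subset[OF continuous_on_product_coordinates])
next
  fix f k assume f: "f \<in> insert (\<lambda>v::nat\<Rightarrow>real. v i) (range (\<lambda>c v. c))"
  show "\<exists>g\<in>insert (\<lambda>v. v i) (range (\<lambda>c v. c)). eqU (pd k f) g"
  proof (cases "f = (\<lambda>v. v i)")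
    case True
    then have "pd k f = (\<lambda>v. if k = i then 1 else 0)" by (simp add: pd_coord)
    then show ?thesis by (intro bexI[of _ "pd k f"]) (simp_all add: range_const)
  next
    case False
    then obtain c where "f = (\<lambda>v. c)" using f by auto
    then show ?thesis by (intro bexI[of _ "\<lambda>v. 0"]) (simp_all add: range_const)
  qed
qed simp

inductive_set alg :: "jetfun set" where
  base: "smooth_on_jet U f \<Longrightarrow> f \<in> alg"
| add: "f \<in> alg \<Longrightarrow> g \<in> alg \<Longrightarrow> (\<lambda>v. f v + g v) \<in> alg"
| mul: "f \<in> alg \<Longrightarrow> g \<in> alg \<Longrightarrow> (\<lambda>v. f v * g v) \<in> alg"

lemma alg_basic: "f \<in> alg \<Longrightarrow> basic f"
proof (induction rule: alg.induct)
  case (base f) then show ?case by (rule smooth_basic)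
next
  case (add f g) then show ?case
    by (auto simp: basic_def intro: ldiff_add continuous_on_add)
next
  case (mul f g) then show ?case
    by (auto simp: basic_def intro: ldiff_mult continuous_on_mult)
qed

lemma alg_pd: "f \<in> alg \<Longrightarrow> \<exists>g\<in>alg. eqU (pd k f) g"
proof (induction rule: alg.induct)
  case (base f) then show ?case by (intro bexI[of _ "pd k f"] alg.base smooth_pd) auto
next
  case (add f g)
  then obtain f' g' where fg: "f' \<in> alg" "eqU (pd k f) f'" "g' \<in> alg" "eqU (pd k g) g'" by blast
  have "eqU (pd k (\<lambda>v. f v + g v)) (\<lambda>v. pd k f v + pd k g v)"
    using pd_add[OF basic_def[THEN iffD1, OF alg_basic[OF add.hyps(1)], THEN conjunct2]
                    basic_def[THEN iffD1, OF alg_basic[OF add.hyps(2)], THEN conjunct2]] .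
  then have e: "eqU (pd k (\<lambda>v. f v + g v)) (\<lambda>v. f' v + g' v)"
    using fg(2,4) unfolding eqU_def by simp
  show ?case using alg.add[OF fg(1,3)] e by blast
next
  case (mul f g)
  then obtain f' g' where fg: "f' \<in> alg" "eqU (pd k f) f'" "g' \<in> alg" "eqU (pd k g) g'" by blast
  have "eqU (pd k (\<lambda>v. f v * g v)) (\<lambda>v. pd k f v * g v + f v * pd k g v)"
    using pd_mult[OF basic_def[THEN iffD1, OF alg_basic[OF mul.hyps(1)], THEN conjunct2]
                    basic_def[THEN iffD1, OF alg_basic[OF mul.hyps(2)], THEN conjunct2]] .
  then have e: "eqU (pd k (\<lambda>v. f v * g v)) (\<lambda>v. f' v * g v + f v * g' v)"
    using fg(2,4) unfolding eqU_def by simp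
  have "(\<lambda>v. f' v * g v + f v * g' v) \<in> alg"
    by (rule alg.add; rule alg.mul; fact)
  then show ?case using e by blast
qed

lemma smooth_alg: "f \<in> alg \<Longrightarrow> smooth_on_jet U f"
  by (rule coind[where P=alg, OF alg_basic alg_pd])

lemma smooth_add: "smooth_on_jet U f \<Longrightarrow> smooth_on_jet U g \<Longrightarrow> smooth_on_jet U (\<lambda>v. f v + g v)"
  by (rule smooth_alg, rule alg.add; rule alg.base)
lemma smooth_mult: "smooth_on_jet U f \<Longrightarrow> smooth_on_jet U g \<Longrightarrow> smooth_on_jet U (\<lambda>v. f v * g v)"
  by (rule smooth_alg, rule alg.mul; rule alg.base)
lemma smooth_cmult: "smooth_on_jet U f \<Longrightarrow> smooth_on_jet U (\<lambda>v. c * f v)"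
  using smooth_mult[OF smooth_const] .
lemma smooth_diff: assumes "smooth_on_jet U f" "smooth_on_jet U g" shows "smooth_on_jet U (\<lambda>v. f v - g v)"
proof -
  have "smooth_on_jet U (\<lambda>v. f v + (-1) * g v)" by (intro smooth_add smooth_cmult assms)
  then show ?thesis by simp
qed
lemma sum_inf_fun: "infinite A \<Longrightarrow> (\<lambda>v. \<Sum>i\<in>A. F i v) = (\<lambda>v. 0)"
  by simp
lemma sum_ins_fun: "finite B \<Longrightarrow> x \<notin> B \<Longrightarrow> (\<lambda>v. \<Sum>i\<in>insert x B. F i v) = (\<lambda>v. F x v + (\<Sum>i\<in>B. F i v))"
  by simp
lemma smooth_sum_inf: assumes "infinite A" shows "smooth_on_jet U (\<lambda>v. \<Sum>i\<in>A. F i v)"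
  unfolding sum_inf_fun[OF assms] by (rule smooth_const)
lemma smooth_sum_ins: assumes "finite B" "x \<notin> B" "smooth_on_jet U (F x)" "smooth_on_jet U (\<lambda>v. \<Sum>i\<in>B. F i v)"
  shows "smooth_on_jet U (\<lambda>v. \<Sum>i\<in>insert x B. F i v)"
  unfolding sum_ins_fun[OF assms(1,2)] by (rule smooth_add[OF assms(3,4)])
lemma smooth_sum: "(\<And>i. i \<in> A \<Longrightarrow> smooth_on_jet U (F i)) \<Longrightarrow> smooth_on_jet U (\<lambda>v. \<Sum>i\<in>A. F i v)"
proof (induction A rule: infinite_finite_induct)
  case (infinite A) show ?case by (rule smooth_sum_inf[OF infinite(1)])
next
  case empty show ?case unfolding sum.empty by (rule smooth_const)
next
  case (insert x B)
  have h1: "smooth_on_jet U (F x)" by (rule insert.prems) simp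
  have h2: "smooth_on_jet U (\<lambda>v. \<Sum>i\<in>B. F i v)" by (rule insert.IH) (rule insert.prems, simp)
  show ?case by (rule smooth_sum_ins[OF insert.hyps h1 h2])
qed

definition dep :: "nat \<Rightarrow> jetfun \<Rightarrow> bool" where
  "dep N f \<longleftrightarrow> m \<le> N \<and> (\<forall>u\<in>U. \<forall>v\<in>U. (\<forall>k\<le>N. u k = v k) \<longrightarrow> f u = f v)"

lemma dep_mono: assumes "dep N f" "N \<le> N'" shows "dep N' f"
  unfolding dep_def
proof (intro conjI ballI impI)
  show "m \<le> N'" using assms unfolding dep_def by simp
  fix u v assume uv: "u \<in> U" "v \<in> U" "\<forall>k\<le>N'. u k = v k"
  then have "\<forall>k\<le>N. u k = v k" using assms(2) by simp
  then show "f u = f v" using assms(1) uv(1,2) unfolding dep_def by blast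
qed

lemma dep_cong: assumes "eqU f g" "dep N f" shows "dep N g"
  unfolding dep_def
proof (intro conjI ballI impI)
  show "m \<le> N" using assms unfolding dep_def by simp
  fix u v assume uv: "u \<in> U" "v \<in> U" "\<forall>k\<le>N. u k = v k"
  then have "f u = f v" using assms(2) unfolding dep_def by blast
  moreover have "f u = g u" "f v = g v" using assms(1) uv(1,2) unfolding eqU_def by auto
  ultimately show "g u = g v" by simp
qed

lemma upd_in: "u \<in> U \<Longrightarrow> m < k \<Longrightarrow> u(k:=t) \<in> U"
  using inv[of "u(k:=t)" u] by auto

lemma pd_zero: assumes "dep N f" "u \<in> U" "N < k" shows "pd k f u = 0"
proof -
  have mk: "m < k" using assms dep_def by auto
  have "(\<lambda>t. f (u(k:=t))) = (\<lambda>t. f u)"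
  proof
    fix t
    have "u(k:=t) \<in> U" by (rule upd_in[OF assms(2) mk])
    moreover have "\<forall>i\<le>N. (u(k:=t)) i = u i" using assms(3) by simp
    ultimately show "f (u(k:=t)) = f u" using assms(1,2) unfolding dep_def by blast
  qed
  then show ?thesis unfolding pd_def by (simp add: DERIV_imp_deriv)
qed

lemma pd_zero': "dep N f \<Longrightarrow> N < k \<Longrightarrow> eqU (pd k f) (\<lambda>v. 0)"
  using pd_zero by (auto simp: eqU_def)

lemma dep_pd: assumes "dep N f" shows "dep N (pd k f)"
  unfolding dep_def
proof (intro conjI ballI impI)
  show "m \<le> N" using assms dep_def by auto
  fix u v assume u: "u \<in> U" and v: "v \<in> U" and uv: "\<forall>k\<le>N. u k = v k"
  show "pd k f u = pd k f v"
  proof (cases "N < k")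
    case True then show ?thesis using pd_zero assms u v by simp
  next
    case False
    then have ukv: "u k = v k" using uv by auto
    have "eventually (\<lambda>t. f (u(k:=t)) = f (v(k:=t))) (nhds (u k))"
    proof (rule eventually_mono[OF loc'[OF u]])
      fix t assume ut: "u(k:=t) \<in> U"
      have agree: "\<forall>i\<le>N. (u(k:=t)) i = (v(k:=t)) i" using uv by auto
      then have "v(k:=t) \<in> U" using inv[of "u(k:=t)" "v(k:=t)"] ut assms unfolding dep_def by auto
      then show "f (u(k:=t)) = f (v(k:=t))" using assms ut agree unfolding dep_def by blast
    qed
    then show ?thesis unfolding pd_def by (rule deriv_cong_ev[OF _ ukv])
  qed
qed

definition Good :: "jetfun \<Rightarrow> bool" where
  "Good f \<longleftrightarrow> smooth_on_jet U f \<and> (\<exists>N. dep N f)"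

lemma Good_cong: assumes "eqU f g" "Good f" shows "Good g"
proof -
  obtain N where "dep N f" "smooth_on_jet U f" using assms(2) unfolding Good_def by blast
  then have "dep N g" "smooth_on_jet U g" using dep_cong[OF assms(1)] smooth_cong[OF assms(1)] by auto
  then show ?thesis unfolding Good_def by blast
qed

lemma Good_smooth: "Good f \<Longrightarrow> smooth_on_jet U f"
  unfolding Good_def by (elim conjE)

lemma Good_ldiff: assumes "Good f" shows "ldiff f"
  using basic_def[THEN iffD1, OF smooth_basic[OF Good_smooth[OF assms]]] by (elim conjE)

lemma Good_pd: assumes "Good f" shows "Good (pd k f)"
proof -
  obtain N where "dep N f" using assms unfolding Good_def by blast
  then have "dep N (pd k f)" by (rule dep_pd)
  moreover have "smooth_on_jet U (pd k f)" by (rule smooth_pd[OF Good_smooth[OF assms]])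
  ultimately show ?thesis unfolding Good_def by blast
qed

lemma Good_const: "Good (\<lambda>v. c)"
proof -
  have "dep m (\<lambda>v. c)" unfolding dep_def by simp
  then show ?thesis unfolding Good_def using smooth_const by blast
qed

lemma Good_coord: "Good (\<lambda>v. v i)"
proof -
  have "dep (max i m) (\<lambda>v. v i)" unfolding dep_def by simp
  then show ?thesis unfolding Good_def using smooth_coord by blast
qed

lemma dep_op: assumes "dep N f" "dep N g" shows "dep N (\<lambda>v. h (f v) (g v))"
proof -
  have mN: "m \<le> N" using assms(1) unfolding dep_def by (elim conjE)
  have "h (f u) (g u) = h (f v) (g v)" if "u \<in> U" "v \<in> U" "\<forall>k\<le>N. u k = v k" for u v
  proof -
    have "f u = f v" using assms(1) that unfolding dep_def by blast
    moreover have "g u = g v" using assms(2) that unfolding dep_def by blast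
    ultimately show ?thesis by simp
  qed
  then show ?thesis using mN unfolding dep_def by blast
qed

lemma Good_op: assumes "Good f" "Good g" "smooth_on_jet U (\<lambda>v. h (f v) (g v))"
  shows "Good (\<lambda>v. h (f v) (g v))"
proof -
  obtain N1 N2 where d: "dep N1 f" "dep N2 g" using assms unfolding Good_def by blast
  have "dep (max N1 N2) f" by (rule dep_mono[OF d(1)]) simp
  moreover have "dep (max N1 N2) g" by (rule dep_mono[OF d(2)]) simp
  ultimately have "dep (max N1 N2) (\<lambda>v. h (f v) (g v))" by (rule dep_op)
  then show ?thesis using assms(3) unfolding Good_def by blast
qed

lemma Good_add: assumes "Good f" "Good g" shows "Good (\<lambda>v. f v + g v)"
  by (rule Good_op[OF assms smooth_add[OF Good_smooth[OF assms(1)] Good_smooth[OF assms(2)]]])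
lemma Good_mult: assumes "Good f" "Good g" shows "Good (\<lambda>v. f v * g v)"
  by (rule Good_op[OF assms smooth_mult[OF Good_smooth[OF assms(1)] Good_smooth[OF assms(2)]]])
lemma Good_diff: assumes "Good f" "Good g" shows "Good (\<lambda>v. f v - g v)"
  by (rule Good_op[OF assms smooth_diff[OF Good_smooth[OF assms(1)] Good_smooth[OF assms(2)]]])
lemma Good_cmult: "Good f \<Longrightarrow> Good (\<lambda>v. c * f v)"
  using Good_mult[OF Good_const] .
lemma Good_sum: "(\<And>i. i \<in> A \<Longrightarrow> Good (F i)) \<Longrightarrow> Good (\<lambda>v. \<Sum>i\<in>A. F i v)"
proof (induction A rule: infinite_finite_induct)
  case (infinite A) then show ?case by (simp add: Good_const)
next
  case empty then show ?case by (simp add: Good_const)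
next
  case (insert x B)
  have h1: "Good (F x)" by (rule insert.prems) simp
  have h2: "Good (\<lambda>v. \<Sum>i\<in>B. F i v)" by (rule insert.IH) (rule insert.prems, simp)
  have "Good (\<lambda>v. F x v + (\<Sum>i\<in>B. F i v))" by (rule Good_add[OF h1 h2])
  then show ?case using insert.hyps by simp
qed



lemma line_k: "ldiff f \<Longrightarrow> u(i:=s,k:=t) \<in> U \<Longrightarrow> DERIV (\<lambda>t. f (u(i:=s,k:=t))) t :> pd k f (u(i:=s,k:=t))"
  using ldiff_DERIV[of f "u(i:=s)" k t] by simp

lemma line_i: assumes "ldiff f" "i \<noteq> k" "u(i:=s,k:=t) \<in> U"
  shows "DERIV (\<lambda>s. f (u(i:=s,k:=t))) s :> pd i f (u(i:=s,k:=t))"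
proof -
  have e: "\<And>s. u(i:=s,k:=t) = u(k:=t,i:=s)" using assms(2) by (simp add: fun_upd_twist)
  have "DERIV (\<lambda>s. f (u(k:=t,i:=s))) s :> pd i f (u(k:=t,i:=s))"
    using ldiff_DERIV[of f "u(k:=t)" i s] assms(1,3) e by simp
  then show ?thesis using e by simp
qed

lemma Delta_eq:
  assumes sm: "smooth_on_jet U f" and ik: "i \<noteq> k" and h: "0 < h"
    and box: "\<And>s t. a \<le> s \<Longrightarrow> s \<le> a+h \<Longrightarrow> b \<le> t \<Longrightarrow> t \<le> b+h \<Longrightarrow> u(i:=s,k:=t) \<in> U"
  shows "\<exists>s t. a<s \<and> s<a+h \<and> b<t \<and> t<b+h \<and>
     f(u(i:=a+h,k:=b+h)) - f(u(i:=a+h,k:=b)) - f(u(i:=a,k:=b+h)) + f(u(i:=a,k:=b))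
       = h*h*pd k (pd i f) (u(i:=s,k:=t))"
proof -
  have lf: "ldiff f" using smooth_basic[OF sm] basic_def by blast
  have lf2: "ldiff (pd i f)" using smooth_basic[OF smooth_pd[OF sm]] basic_def by blast
  have "a < a + h" "b < b + h" using h by auto
  have dA: "DERIV (\<lambda>s. f(u(i:=s,k:=b+h)) - f(u(i:=s,k:=b))) s :> pd i f (u(i:=s,k:=b+h)) - pd i f (u(i:=s,k:=b))"
    if "a \<le> s" "s \<le> a+h" for s
    using that h by (intro DERIV_diff line_i lf ik box) auto
  obtain s where s: "a < s" "s < a+h"
    and sA: "(f(u(i:=a+h,k:=b+h)) - f(u(i:=a+h,k:=b))) - (f(u(i:=a,k:=b+h)) - f(u(i:=a,k:=b)))
             = (a + h - a) * (pd i f (u(i:=s,k:=b+h)) - pd i f (u(i:=s,k:=b)))"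
    using MVT2[OF \<open>a < a + h\<close> dA] by blast
  have dB: "DERIV (\<lambda>t. pd i f (u(i:=s,k:=t))) t :> pd k (pd i f) (u(i:=s,k:=t))"
    if "b \<le> t" "t \<le> b+h" for t
    using that s by (intro line_k lf2 box) auto
  obtain t where t: "b < t" "t < b+h"
    and tB: "pd i f (u(i:=s,k:=b+h)) - pd i f (u(i:=s,k:=b)) = (b + h - b) * pd k (pd i f) (u(i:=s,k:=t))"
    using MVT2[OF \<open>b < b + h\<close> dB] by blast
  show ?thesis
    by (rule exI[of _ s], rule exI[of _ t]) (use s t sA tB in \<open>simp add: algebra_simps\<close>)
qed


lemma cont_W: "continuous_on UNIV (\<lambda>p::real\<times>real. u(i:=fst p, k:=snd p))"
  apply (intro continuous_on_coordinatewise_then_product)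
  subgoal for j by (cases "j = k"; cases "j = i") (auto intro: continuous_intros)
  done

lemma ev_W: fixes G :: jetfun assumes "continuous_on U G" "u \<in> U" "G u < c"
  shows "eventually (\<lambda>p. u(i:=fst p, k:=snd p) \<in> U \<and> G (u(i:=fst p, k:=snd p)) < c) (nhds (u i, u k))"
proof -
  let ?W = "\<lambda>p::real\<times>real. u(i:=fst p, k:=snd p)"
  have o: "open (?W -` U \<inter> UNIV)"
    using iffD1[OF continuous_on_open_vimage[OF open_UNIV] cont_W, rule_format, OF opn] .
  have W0: "?W (u i, u k) = u" by simp
  have mem: "(u i, u k) \<in> ?W -` U" using assms(2) by simp
  have "continuous_on (?W -` U) (G \<circ> ?W)"
    by (rule continuous_on_compose[OF continuous_on_subset[OF cont_W]]) (auto intro: continuous_on_subset[OF assms(1)])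
  moreover have o': "open (?W -` U)" using o by simp
  ultimately have cv: "\<forall>B. open B \<longrightarrow> open ((G \<circ> ?W) -` B \<inter> ?W -` U)"
    using iffD1[OF continuous_on_open_vimage[OF o']] by blast
  have "open ((G \<circ> ?W) -` {..<c} \<inter> ?W -` U)"
    using cv[rule_format, OF open_lessThan] .
  moreover have "(u i, u k) \<in> (G \<circ> ?W) -` {..<c} \<inter> ?W -` U" using assms(2,3) by simp
  ultimately have "eventually (\<lambda>p. p \<in> (G \<circ> ?W) -` {..<c} \<inter> ?W -` U) (nhds (u i, u k))"
    by (rule eventually_nhds_in_open)
  then show ?thesis by (rule eventually_mono) auto
qed


lemma dist_box: assumes "0 < e" "a \<le> s" "s \<le> a + e/3" "b \<le> t" "t \<le> b + e/3"
  shows "dist (s, t) (a, b) < e"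
proof -
  have "(s-a)^2 \<le> (e/3)^2" by (rule power_mono) (use assms in auto)
  moreover have "(t-b)^2 \<le> (e/3)^2" by (rule power_mono) (use assms in auto)
  moreover have "2 * (e/3)^2 < e^2" using assms(1) by (simp add: power2_eq_square)
  ultimately have "(s-a)^2 + (t-b)^2 < e^2" by simp
  then have "sqrt ((s-a)^2 + (t-b)^2) < sqrt (e^2)" by (rule real_sqrt_less_mono)
  then show ?thesis using assms(1) by (simp add: dist_Pair_Pair dist_real_def)
qed

lemma smooth_cont: "smooth_on_jet U f \<Longrightarrow> continuous_on U f"
  using smooth_basic basic_def by blast

lemma mixed_le: assumes sm: "smooth_on_jet U f" and u: "u \<in> U" and ik: "i \<noteq> k"
  shows "pd i (pd k f) u \<le> pd k (pd i f) u"
proof (rule ccontr)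
  define G where "G = pd k (pd i f)"
  define H where "H = pd i (pd k f)"
  assume "\<not> pd i (pd k f) u \<le> pd k (pd i f) u"
  then have GH: "G u < H u" unfolding G_def H_def by simp
  define c where "c = (G u + H u) / 2"
  have Gc: "G u < c" and Hc: "- H u < - c" using GH unfolding c_def by auto
  have cG: "continuous_on U G" unfolding G_def by (intro smooth_cont smooth_pd sm)
  have cH: "continuous_on U (\<lambda>v. - H v)" unfolding H_def by (intro continuous_on_minus smooth_cont smooth_pd sm)
  have "eventually (\<lambda>p. (u(i:=fst p, k:=snd p) \<in> U \<and> G (u(i:=fst p, k:=snd p)) < c) \<and>
      (u(i:=fst p, k:=snd p) \<in> U \<and> - H (u(i:=fst p, k:=snd p)) < - c)) (nhds (u i, u k))"
    by (intro eventually_conj ev_W cG cH u Gc Hc)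
  then obtain e where e: "0 < e" and P: "\<And>p. dist p (u i, u k) < e \<Longrightarrow>
      (u(i:=fst p, k:=snd p) \<in> U \<and> G (u(i:=fst p, k:=snd p)) < c) \<and>
      (u(i:=fst p, k:=snd p) \<in> U \<and> - H (u(i:=fst p, k:=snd p)) < - c)"
    unfolding eventually_nhds_metric by blast
  define h where "h = e / 3"
  have h: "0 < h" using e h_def by simp
  define a where "a = u i"
  define b where "b = u k"
  have boxP: "u(i:=s, k:=t) \<in> U \<and> G (u(i:=s, k:=t)) < c \<and> H (u(i:=s, k:=t)) > c"
    if "a \<le> s" "s \<le> a+h" "b \<le> t" "t \<le> b+h" for s t
  proof -
    have "dist (s, t) (u i, u k) < e" using dist_box[OF e] that unfolding a_def b_def h_def by blast
    then show ?thesis using P[of "(s,t)"] by auto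
  qed
  obtain s1 t1 where st1: "a<s1" "s1<a+h" "b<t1" "t1<b+h"
    and D1: "f(u(i:=a+h,k:=b+h)) - f(u(i:=a+h,k:=b)) - f(u(i:=a,k:=b+h)) + f(u(i:=a,k:=b))
       = h*h*G (u(i:=s1,k:=t1))"
    using Delta_eq[OF sm ik h, of a b u] boxP unfolding G_def by blast
  have tw: "\<And>s t. u(k:=t, i:=s) = u(i:=s, k:=t)" using ik by (simp add: fun_upd_twist)
  obtain t2 s2 where st2: "b<t2" "t2<b+h" "a<s2" "s2<a+h"
    and D2: "f(u(k:=b+h,i:=a+h)) - f(u(k:=b+h,i:=a)) - f(u(k:=b,i:=a+h)) + f(u(k:=b,i:=a))
       = h*h*H (u(k:=t2,i:=s2))"
    using Delta_eq[OF sm ik[symmetric] h, of b a u] boxP unfolding H_def tw by blast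
  have "G (u(i:=s1,k:=t1)) < c" using boxP st1 by auto
  then have "h*h*G (u(i:=s1,k:=t1)) < h*h*c" using h by simp
  moreover have "H (u(i:=s2,k:=t2)) > c" using boxP st2 by auto
  then have "h*h*H (u(i:=s2,k:=t2)) > h*h*c" using h by simp
  ultimately show False using D1 D2 unfolding tw by linarith
qed

lemma schwarz: assumes "smooth_on_jet U f" "u \<in> U"
  shows "pd i (pd k f) u = pd k (pd i f) u"
proof (cases "i = k")
  case True then show ?thesis by simp
next
  case False
  show ?thesis using mixed_le[OF assms False] mixed_le[OF assms False[symmetric]] by simp
qed



declare eqU_trans[trans]

lemma Dtot_fin: assumes "dep N f" "u \<in> U" "N < K"
  shows "Dtot f u = (\<Sum>k<K. u (Suc k) * pd k f u)"
  unfolding Dtot_def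
proof (rule suminf_finite)
  fix n assume "n \<notin> {..<K}"
  then have "N < n" using assms(3) by simp
  then show "u (Suc n) * pd n f u = 0" using pd_zero[OF assms(1,2)] by simp
qed simp

lemma Dtot_cong: assumes "eqU f g" shows "eqU (Dtot f) (Dtot g)"
  unfolding eqU_def
proof
  fix u assume u: "u \<in> U"
  have "\<And>k. pd k f u = pd k g u" using pd_cong[OF assms] u unfolding eqU_def by blast
  then show "Dtot f u = Dtot g u" unfolding Dtot_def by simp
qed

lemma Dn_cong: "eqU f g \<Longrightarrow> eqU ((Dtot ^^ j) f) ((Dtot ^^ j) g)"
  by (induction j) (auto intro: Dtot_cong)

lemma Dtot_zero: "Dtot (\<lambda>v. 0) = (\<lambda>v. 0)"
  unfolding Dtot_def by simp

lemma Dn_zero: "(Dtot ^^ j) (\<lambda>v. 0) = (\<lambda>v. 0)"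
  by (induction j) (auto simp: Dtot_zero)

lemma Dn_zero': "eqU f (\<lambda>v. 0) \<Longrightarrow> eqU ((Dtot ^^ j) f) (\<lambda>v. 0)"
  using Dn_cong[of f "\<lambda>v. 0" j] by (simp add: Dn_zero)

lemma Dtot_coord: "Dtot (\<lambda>v. v i) = (\<lambda>v. v (Suc i))"
proof
  fix u :: "nat \<Rightarrow> real"
  have "Dtot (\<lambda>v. v i) u = (\<Sum>k. u (Suc k) * (if k = i then 1 else 0))"
    unfolding Dtot_def pd_coord by simp
  also have "\<dots> = (\<Sum>k\<in>{i}. u (Suc k) * (if k = i then 1 else 0))"
    by (rule suminf_finite) auto
  finally show "Dtot (\<lambda>v. v i) u = u (Suc i)" by simp
qed

lemma Dn_coord: "(Dtot ^^ j) (\<lambda>v. v i) = (\<lambda>v. v (i + j))"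
  by (induction j) (auto simp: Dtot_coord)

lemma dep_Dtot: assumes "dep N f" shows "dep (Suc N) (Dtot f)"
  unfolding dep_def
proof (intro conjI ballI impI)
  show "m \<le> Suc N" using assms unfolding dep_def by simp
  fix u v assume uv: "u \<in> U" "v \<in> U" "\<forall>k\<le>Suc N. u k = v k"
  have "\<forall>k\<le>N. u k = v k" using uv(3) by simp
  then have p: "pd k f u = pd k f v" for k using dep_pd[OF assms, of k] uv(1,2) unfolding dep_def by blast
  have "Dtot f u = (\<Sum>k<Suc N. u (Suc k) * pd k f u)" by (rule Dtot_fin[OF assms uv(1)]) simp
  also have "\<dots> = (\<Sum>k<Suc N. v (Suc k) * pd k f v)"
    by (rule sum.cong[OF refl]) (use uv(3) p in simp)
  also have "\<dots> = Dtot f v" by (rule Dtot_fin[OF assms uv(2), symmetric]) simp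
  finally show "Dtot f u = Dtot f v" .
qed

lemma Good_dep: "Good f \<Longrightarrow> \<exists>N. dep N f"
  unfolding Good_def by (elim conjE)

lemma Good_Dtot: assumes "Good f" shows "Good (Dtot f)"
proof -
  obtain N where d: "dep N f" using Good_dep[OF assms] by blast
  have e: "eqU (\<lambda>v. \<Sum>k<Suc N. v (Suc k) * pd k f v) (Dtot f)"
    unfolding eqU_def by (intro ballI, rule Dtot_fin[OF d, symmetric]) simp_all
  have "Good (\<lambda>v. \<Sum>k<Suc N. v (Suc k) * pd k f v)"
    by (rule Good_sum, rule Good_mult, rule Good_coord, rule Good_pd[OF assms])
  then show ?thesis using Good_cong[OF e] by blast
qed

lemma Good_Dn: "Good f \<Longrightarrow> Good ((Dtot ^^ j) f)"
  by (induction j) (auto intro: Good_Dtot)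

lemma dep_common: assumes "Good f" "Good g" obtains N where "dep N f" "dep N g"
proof -
  obtain N1 N2 where d: "dep N1 f" "dep N2 g" using Good_dep assms by blast
  have "dep (max N1 N2) f" by (rule dep_mono[OF d(1)]) simp
  moreover have "dep (max N1 N2) g" by (rule dep_mono[OF d(2)]) simp
  ultimately show ?thesis using that by blast
qed

lemma pd_at: "eqU F G \<Longrightarrow> u \<in> U \<Longrightarrow> F u = G u"
  unfolding eqU_def by blast

lemma Dtot_add: assumes "Good f" "Good g"
  shows "eqU (Dtot (\<lambda>v. f v + g v)) (\<lambda>v. Dtot f v + Dtot g v)"
proof -
  obtain N where d: "dep N f" "dep N g" using dep_common[OF assms] by blast
  have d3: "dep N (\<lambda>v. f v + g v)" by (rule dep_op[OF d])
  show ?thesis unfolding eqU_def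
  proof
    fix u assume u: "u \<in> U"
    have "Dtot (\<lambda>v. f v + g v) u = (\<Sum>k<Suc N. u (Suc k) * pd k (\<lambda>v. f v + g v) u)"
      by (rule Dtot_fin[OF d3 u]) simp
    also have "\<dots> = (\<Sum>k<Suc N. u (Suc k) * (pd k f u + pd k g u))"
      using pd_at[OF pd_add[OF Good_ldiff[OF assms(1)] Good_ldiff[OF assms(2)]] u] by simp
    also have "\<dots> = (\<Sum>k<Suc N. u (Suc k) * pd k f u) + (\<Sum>k<Suc N. u (Suc k) * pd k g u)"
      by (simp add: distrib_left sum.distrib)
    also have "\<dots> = Dtot f u + Dtot g u" using Dtot_fin[OF d(1) u lessI] Dtot_fin[OF d(2) u lessI] by simp
    finally show "Dtot (\<lambda>v. f v + g v) u = Dtot f u + Dtot g u" .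
  qed
qed

lemma Dtot_diff: assumes "Good f" "Good g"
  shows "eqU (Dtot (\<lambda>v. f v - g v)) (\<lambda>v. Dtot f v - Dtot g v)"
proof -
  obtain N where d: "dep N f" "dep N g" using dep_common[OF assms] by blast
  have d3: "dep N (\<lambda>v. f v - g v)" by (rule dep_op[OF d])
  show ?thesis unfolding eqU_def
  proof
    fix u assume u: "u \<in> U"
    have "Dtot (\<lambda>v. f v - g v) u = (\<Sum>k<Suc N. u (Suc k) * pd k (\<lambda>v. f v - g v) u)"
      by (rule Dtot_fin[OF d3 u]) simp
    also have "\<dots> = (\<Sum>k<Suc N. u (Suc k) * (pd k f u - pd k g u))"
      using pd_at[OF pd_diff[OF Good_ldiff[OF assms(1)] Good_ldiff[OF assms(2)]] u] by simp
    also have "\<dots> = (\<Sum>k<Suc N. u (Suc k) * pd k f u) - (\<Sum>k<Suc N. u (Suc k) * pd k g u)"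
      by (simp add: right_diff_distrib sum_subtractf)
    also have "\<dots> = Dtot f u - Dtot g u" using Dtot_fin[OF d(1) u lessI] Dtot_fin[OF d(2) u lessI] by simp
    finally show "Dtot (\<lambda>v. f v - g v) u = Dtot f u - Dtot g u" .
  qed
qed

lemma Dtot_mult: assumes "Good f" "Good g"
  shows "eqU (Dtot (\<lambda>v. f v * g v)) (\<lambda>v. Dtot f v * g v + f v * Dtot g v)"
proof -
  obtain N where d: "dep N f" "dep N g" using dep_common[OF assms] by blast
  have d3: "dep N (\<lambda>v. f v * g v)" by (rule dep_op[OF d])
  show ?thesis unfolding eqU_def
  proof
    fix u assume u: "u \<in> U"
    have "Dtot (\<lambda>v. f v * g v) u = (\<Sum>k<Suc N. u (Suc k) * pd k (\<lambda>v. f v * g v) u)"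
      by (rule Dtot_fin[OF d3 u]) simp
    also have "\<dots> = (\<Sum>k<Suc N. u (Suc k) * (pd k f u * g u + f u * pd k g u))"
      using pd_at[OF pd_mult[OF Good_ldiff[OF assms(1)] Good_ldiff[OF assms(2)]] u] by simp
    also have "\<dots> = (\<Sum>k<Suc N. u (Suc k) * pd k f u) * g u + f u * (\<Sum>k<Suc N. u (Suc k) * pd k g u)"
      by (simp add: algebra_simps sum.distrib sum_distrib_left sum_distrib_right)
    also have "\<dots> = Dtot f u * g u + f u * Dtot g u" using Dtot_fin[OF d(1) u lessI] Dtot_fin[OF d(2) u lessI] by simp
    finally show "Dtot (\<lambda>v. f v * g v) u = Dtot f u * g u + f u * Dtot g u" .
  qed
qed

lemma Dtot_cmult: assumes "Good f"
  shows "eqU (Dtot (\<lambda>v. c * f v)) (\<lambda>v. c * Dtot f v)"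
  using Dtot_mult[OF Good_const assms, of c] by (simp add: Dtot_def eqU_def)


lemma Dn_Suc: "(Dtot ^^ Suc j) f = Dtot ((Dtot ^^ j) f)" by simp

lemma Dn_add: assumes "Good f" "Good g"
  shows "eqU ((Dtot ^^ j) (\<lambda>v. f v + g v)) (\<lambda>v. (Dtot ^^ j) f v + (Dtot ^^ j) g v)"
proof (induction j)
  case 0 then show ?case by simp
next
  case (Suc j)
  have "eqU (Dtot ((Dtot ^^ j) (\<lambda>v. f v + g v))) (Dtot (\<lambda>v. (Dtot ^^ j) f v + (Dtot ^^ j) g v))"
    by (rule Dtot_cong[OF Suc.IH])
  also have "eqU (Dtot (\<lambda>v. (Dtot ^^ j) f v + (Dtot ^^ j) g v)) (\<lambda>v. Dtot ((Dtot ^^ j) f) v + Dtot ((Dtot ^^ j) g) v)"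
    by (rule Dtot_add[OF Good_Dn[OF assms(1)] Good_Dn[OF assms(2)]])
  finally show ?case by simp
qed


lemma Dn_diff: assumes "Good f" "Good g"
  shows "eqU ((Dtot ^^ j) (\<lambda>v. f v - g v)) (\<lambda>v. (Dtot ^^ j) f v - (Dtot ^^ j) g v)"
proof (induction j)
  case 0 then show ?case by simp
next
  case (Suc j)
  have "eqU (Dtot ((Dtot ^^ j) (\<lambda>v. f v - g v))) (Dtot (\<lambda>v. (Dtot ^^ j) f v - (Dtot ^^ j) g v))"
    by (rule Dtot_cong[OF Suc.IH])
  also have "eqU (Dtot (\<lambda>v. (Dtot ^^ j) f v - (Dtot ^^ j) g v)) (\<lambda>v. Dtot ((Dtot ^^ j) f) v - Dtot ((Dtot ^^ j) g) v)"
    by (rule Dtot_diff[OF Good_Dn[OF assms(1)] Good_Dn[OF assms(2)]])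
  finally show ?case by simp
qed

lemma Dn_cmult: assumes "Good f"
  shows "eqU ((Dtot ^^ j) (\<lambda>v. c * f v)) (\<lambda>v. c * (Dtot ^^ j) f v)"
proof (induction j)
  case 0 then show ?case by simp
next
  case (Suc j)
  have "eqU (Dtot ((Dtot ^^ j) (\<lambda>v. c * f v))) (Dtot (\<lambda>v. c * (Dtot ^^ j) f v))"
    by (rule Dtot_cong[OF Suc.IH])
  also have "eqU (Dtot (\<lambda>v. c * (Dtot ^^ j) f v)) (\<lambda>v. c * Dtot ((Dtot ^^ j) f) v)"
    by (rule Dtot_cmult[OF Good_Dn[OF assms]])
  finally show ?case by simp
qed

lemma Dn_pd_zero: assumes "dep N f" "N < j" "u \<in> U"
  shows "(Dtot ^^ i) (pd j f) u = 0"
  using pd_at[OF Dn_zero'[OF pd_zero'[OF assms(1,2)]] assms(3)] by simp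

lemma comm: assumes "Good f"
  shows "eqU (pd k (Dtot f)) (\<lambda>v. Dtot (pd k f) v + (if k = 0 then 0 else pd (k - 1) f v))"
proof -
  obtain N where d: "dep N f" using Good_dep[OF assms] by blast
  define S where "S = (\<lambda>v. \<Sum>i<Suc N. v (Suc i) * pd i f v)"
  have e1: "eqU (Dtot f) S" unfolding eqU_def S_def by (intro ballI, rule Dtot_fin[OF d]) simp_all
  have ld: "\<And>i. ldiff (\<lambda>v. v (Suc i) * pd i f v)"
    by (intro ldiff_mult ldiff_coord Good_ldiff Good_pd assms)
  have e2: "eqU (pd k S) (\<lambda>v. \<Sum>i<Suc N. pd k (\<lambda>v. v (Suc i) * pd i f v) v)"
    unfolding S_def by (rule pd_sum) (simp_all add: ld)
  show ?thesis unfolding eqU_def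
  proof
    fix u assume u: "u \<in> U"
    have pm: "\<And>i. pd k (\<lambda>v. v (Suc i) * pd i f v) u = (if k = Suc i then 1 else 0) * pd i f u + u (Suc i) * pd k (pd i f) u"
      using pd_at[OF pd_mult[OF ldiff_coord Good_ldiff[OF Good_pd[OF assms]]] u] by (simp add: pd_coord)
    have sw: "\<And>i. pd k (pd i f) u = pd i (pd k f) u" using schwarz[OF Good_smooth[OF assms] u] by simp
    have first: "(\<Sum>i<Suc N. (if k = Suc i then 1 else 0) * pd i f u) = (if k = 0 then 0 else pd (k - 1) f u)"
    proof (cases k)
      case 0 then show ?thesis by simp
    next
      case (Suc k')
      have "(\<Sum>i<Suc N. (if k = Suc i then 1 else 0) * pd i f u) = (\<Sum>i<Suc N. if k' = i then pd i f u else 0)"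
        by (rule sum.cong[OF refl]) (simp add: Suc)
      also have "\<dots> = (if k' < Suc N then pd k' f u else 0)" by simp
      also have "\<dots> = pd k' f u" using pd_zero[OF d u, of k'] by auto
      finally show ?thesis by (simp add: Suc)
    qed
    have "pd k (Dtot f) u = pd k S u" using pd_at[OF pd_cong[OF e1] u] .
    also have "\<dots> = (\<Sum>i<Suc N. pd k (\<lambda>v. v (Suc i) * pd i f v) u)" using pd_at[OF e2 u] .
    also have "\<dots> = (\<Sum>i<Suc N. (if k = Suc i then 1 else 0) * pd i f u) + (\<Sum>i<Suc N. u (Suc i) * pd i (pd k f) u)"
      by (simp only: pm sw sum.distrib)
    also have "\<dots> = (if k = 0 then 0 else pd (k - 1) f u) + Dtot (pd k f) u"
      using first Dtot_fin[OF dep_pd[OF d] u lessI] by simp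
    finally show "pd k (Dtot f) u = Dtot (pd k f) u + (if k = 0 then 0 else pd (k - 1) f u)" by simp
  qed
qed



definition EL :: "nat \<Rightarrow> jetfun \<Rightarrow> jetfun" where
  "EL K f = (\<lambda>v. \<Sum>j<K. (-1) ^ j * (Dtot ^^ j) (pd j f) v)"

lemma Good_EL: "Good f \<Longrightarrow> Good (EL K f)"
  unfolding EL_def by (intro Good_sum Good_cmult Good_Dn Good_pd)

lemma EL_cong: assumes "eqU f g" shows "eqU (EL K f) (EL K g)"
  unfolding eqU_def EL_def
proof
  fix u assume u: "u \<in> U"
  have "\<And>j. (Dtot ^^ j) (pd j f) u = (Dtot ^^ j) (pd j g) u"
    using pd_at[OF Dn_cong[OF pd_cong[OF assms]] u] .
  then show "(\<Sum>j<K. (-1) ^ j * (Dtot ^^ j) (pd j f) u) = (\<Sum>j<K. (-1) ^ j * (Dtot ^^ j) (pd j g) u)"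
    by simp
qed

lemma EL_ext: assumes "dep N f" "N < K" shows "eqU (EL K f) (EL (K + d) f)"
proof (induction d)
  case 0 then show ?case by simp
next
  case (Suc d)
  show ?case unfolding eqU_def
  proof
    fix u assume u: "u \<in> U"
    have "EL (K + Suc d) f u = EL (K + d) f u + (-1) ^ (K + d) * (Dtot ^^ (K + d)) (pd (K + d) f) u"
      unfolding EL_def by simp
    also have "\<dots> = EL (K + d) f u" using Dn_pd_zero[OF assms(1) _ u, of "K + d" "K + d"] assms(2) by simp
    finally show "EL K f u = EL (K + Suc d) f u" using pd_at[OF Suc.IH u] by simp
  qed
qed

lemma EL_stable: assumes "dep N f" "N < K" "N < K'" shows "eqU (EL K f) (EL K' f)"
proof (cases "K \<le> K'")
  case True
  then show ?thesis using EL_ext[OF assms(1,2), of "K' - K"] by simp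
next
  case False
  then show ?thesis using EL_ext[OF assms(1,3), of "K - K'"] by (simp add: eqU_def)
qed

lemma EL_add: assumes "Good f" "Good g"
  shows "eqU (EL K (\<lambda>v. f v + g v)) (\<lambda>v. EL K f v + EL K g v)"
  unfolding eqU_def
proof
  fix u assume u: "u \<in> U"
  have t: "(Dtot ^^ j) (pd j (\<lambda>v. f v + g v)) u = (Dtot ^^ j) (pd j f) u + (Dtot ^^ j) (pd j g) u" for j
  proof -
    have "(Dtot ^^ j) (pd j (\<lambda>v. f v + g v)) u = (Dtot ^^ j) (\<lambda>v. pd j f v + pd j g v) u"
      using pd_at[OF Dn_cong[OF pd_add[OF Good_ldiff[OF assms(1)] Good_ldiff[OF assms(2)]]] u] .
    also have "\<dots> = (Dtot ^^ j) (pd j f) u + (Dtot ^^ j) (pd j g) u"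
      using pd_at[OF Dn_add[OF Good_pd[OF assms(1)] Good_pd[OF assms(2)]] u] .
    finally show ?thesis .
  qed
  show "EL K (\<lambda>v. f v + g v) u = EL K f u + EL K g u"
    unfolding EL_def by (simp add: t distrib_left sum.distrib)
qed

lemma EL_diff: assumes "Good f" "Good g"
  shows "eqU (EL K (\<lambda>v. f v - g v)) (\<lambda>v. EL K f v - EL K g v)"
  unfolding eqU_def
proof
  fix u assume u: "u \<in> U"
  have t: "(Dtot ^^ j) (pd j (\<lambda>v. f v - g v)) u = (Dtot ^^ j) (pd j f) u - (Dtot ^^ j) (pd j g) u" for j
  proof -
    have "(Dtot ^^ j) (pd j (\<lambda>v. f v - g v)) u = (Dtot ^^ j) (\<lambda>v. pd j f v - pd j g v) u"
      using pd_at[OF Dn_cong[OF pd_diff[OF Good_ldiff[OF assms(1)] Good_ldiff[OF assms(2)]]] u] .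
    also have "\<dots> = (Dtot ^^ j) (pd j f) u - (Dtot ^^ j) (pd j g) u"
      using pd_at[OF Dn_diff[OF Good_pd[OF assms(1)] Good_pd[OF assms(2)]] u] .
    finally show ?thesis .
  qed
  show "EL K (\<lambda>v. f v - g v) u = EL K f u - EL K g u"
    unfolding EL_def by (simp add: t right_diff_distrib sum_subtractf)
qed

lemma alt_sum: "(\<Sum>j<Suc M. (-1::real) ^ j * (X j + (if j = 0 then 0 else X (j - 1)))) = (-1) ^ M * X M"
  by (induction M) (auto simp: algebra_simps)

lemma EL_term: assumes "Good R" "u \<in> U"
  shows "(Dtot ^^ j) (pd j (Dtot R)) u = (Dtot ^^ Suc j) (pd j R) u + (if j = 0 then 0 else (Dtot ^^ j) (pd (j - 1) R) u)"
proof -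
  have "(Dtot ^^ j) (pd j (Dtot R)) u = (Dtot ^^ j) (\<lambda>v. Dtot (pd j R) v + (if j = 0 then 0 else pd (j - 1) R v)) u"
    using pd_at[OF Dn_cong[OF comm[OF assms(1)]] assms(2)] .
  also have "\<dots> = (Dtot ^^ Suc j) (pd j R) u + (if j = 0 then 0 else (Dtot ^^ j) (pd (j - 1) R) u)"
  proof (cases j)
    case 0 then show ?thesis by simp
  next
    case (Suc i)
    have "(Dtot ^^ j) (\<lambda>v. Dtot (pd j R) v + pd i R v) u = (Dtot ^^ j) (Dtot (pd j R)) u + (Dtot ^^ j) (pd i R) u"
      using pd_at[OF Dn_add[OF Good_Dtot[OF Good_pd[OF assms(1)]] Good_pd[OF assms(1)]] assms(2)] .
    moreover have "(Dtot ^^ j) (Dtot (pd j R)) = (Dtot ^^ Suc j) (pd j R)"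
      by (simp only: funpow_Suc_right o_apply)
    ultimately show ?thesis using Suc by simp
  qed
  finally show ?thesis .
qed

lemma EL_Dtot: assumes "Good R" "dep N R"
  shows "eqU (EL (Suc (Suc N)) (Dtot R)) (\<lambda>v. 0)"
  unfolding eqU_def
proof
  fix u assume u: "u \<in> U"
  define X where "X j = (Dtot ^^ Suc j) (pd j R) u" for j
  have "EL (Suc (Suc N)) (Dtot R) u = (\<Sum>j<Suc (Suc N). (-1) ^ j * (X j + (if j = 0 then 0 else X (j - 1))))"
    unfolding EL_def X_def by (rule sum.cong[OF refl]) (auto simp: EL_term[OF assms(1) u])
  also have "\<dots> = (-1) ^ Suc N * X (Suc N)" by (rule alt_sum)
  also have "X (Suc N) = 0" unfolding X_def by (rule Dn_pd_zero[OF assms(2) _ u]) simp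
  finally show "EL (Suc (Suc N)) (Dtot R) u = 0" by simp
qed


lemma ibp: assumes "Good a" "Good b"
  shows "\<exists>T. Good T \<and> eqU (\<lambda>v. (Dtot ^^ j) a v * b v - (-1) ^ j * a v * (Dtot ^^ j) b v) (Dtot T)"
  using assms(2)
proof (induction j arbitrary: b)
  case 0
  have "eqU (\<lambda>v. (Dtot ^^ 0) a v * b v - (-1) ^ 0 * a v * (Dtot ^^ 0) b v) (Dtot (\<lambda>v. 0))"
    by (simp add: Dtot_zero eqU_def)
  then show ?case using Good_const by blast
next
  case (Suc j)
  have gDb: "Good (Dtot b)" by (rule Good_Dtot[OF Suc.prems])
  obtain T' where T': "Good T'"
    "eqU (\<lambda>v. (Dtot ^^ j) a v * Dtot b v - (-1) ^ j * a v * (Dtot ^^ j) (Dtot b) v) (Dtot T')"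
    using Suc.IH[OF gDb] by blast
  have gA: "Good ((Dtot ^^ j) a)" by (rule Good_Dn[OF assms(1)])
  have gAb: "Good (\<lambda>v. (Dtot ^^ j) a v * b v)" by (rule Good_mult[OF gA Suc.prems])
  define T where "T = (\<lambda>v. (Dtot ^^ j) a v * b v - T' v)"
  have gT: "Good T" unfolding T_def by (rule Good_diff[OF gAb T'(1)])
  have "eqU (\<lambda>v. (Dtot ^^ Suc j) a v * b v - (-1) ^ Suc j * a v * (Dtot ^^ Suc j) b v) (Dtot T)"
    unfolding eqU_def
  proof
    fix u assume u: "u \<in> U"
    have e1: "Dtot T u = Dtot (\<lambda>v. (Dtot ^^ j) a v * b v) u - Dtot T' u"
      unfolding T_def using pd_at[OF Dtot_diff[OF gAb T'(1)] u] .
    have e2: "Dtot (\<lambda>v. (Dtot ^^ j) a v * b v) u = Dtot ((Dtot ^^ j) a) u * b u + (Dtot ^^ j) a u * Dtot b u"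
      using pd_at[OF Dtot_mult[OF gA Suc.prems] u] .
    have e3: "Dtot T' u = (Dtot ^^ j) a u * Dtot b u - (-1) ^ j * a u * (Dtot ^^ j) (Dtot b) u"
      using pd_at[OF T'(2) u] by simp
    have e4: "(Dtot ^^ j) (Dtot b) = (Dtot ^^ Suc j) b" by (simp only: funpow_Suc_right o_apply)
    show "(Dtot ^^ Suc j) a u * b u - (-1) ^ Suc j * a u * (Dtot ^^ Suc j) b u = Dtot T u"
      using e1 e2 e3 e4 by simp
  qed
  then show ?case using gT by blast
qed

lemma exact_sum: fixes K :: nat assumes "\<And>j. j < K \<Longrightarrow> \<exists>T. Good T \<and> eqU (F j) (Dtot T)"
  shows "\<exists>R. Good R \<and> eqU (\<lambda>v. \<Sum>j<K. F j v) (Dtot R)"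
  using assms
proof (induction K)
  case 0
  have "eqU (\<lambda>v. \<Sum>j<0. F j v) (Dtot (\<lambda>v. 0))" by (simp add: Dtot_zero eqU_def)
  then show ?case using Good_const by blast
next
  case (Suc K)
  obtain R where R: "Good R" "eqU (\<lambda>v. \<Sum>j<K. F j v) (Dtot R)" using Suc by auto
  obtain T where T: "Good T" "eqU (F K) (Dtot T)" using Suc.prems[of K] by auto
  have "eqU (\<lambda>v. \<Sum>j<Suc K. F j v) (Dtot (\<lambda>v. R v + T v))"
    unfolding eqU_def
  proof
    fix u assume u: "u \<in> U"
    show "(\<Sum>j<Suc K. F j u) = Dtot (\<lambda>v. R v + T v) u"
      using pd_at[OF R(2) u] pd_at[OF T(2) u] pd_at[OF Dtot_add[OF R(1) T(1)] u] by simp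
  qed
  then show ?case using Good_add[OF R(1) T(1)] by blast
qed


lemma main_loc:
  fixes \<phi> :: jetfun
  assumes dphi: "dep m \<phi>" and sm: "smooth_on_jet U \<phi>" and Ephi: "\<And>u. u \<in> U \<Longrightarrow> Eop \<phi> u = \<phi> u"
  shows "\<forall>u\<in>U. Lop (Lambda_op \<phi>) u = 0"
proof -
  have gphi: "Good \<phi>" unfolding Good_def using sm dphi by blast
  define P where "P = EL (Suc m) \<phi>"
  have gP: "Good P" unfolding P_def by (rule Good_EL[OF gphi])
  define F where "F j = (\<lambda>v. (Dtot ^^ j) (\<lambda>v. v 0) v * pd j \<phi> v - (-1) ^ j * v 0 * (Dtot ^^ j) (pd j \<phi>) v)" for j
  obtain R where R: "Good R" "eqU (\<lambda>v. \<Sum>j<Suc m. F j v) (Dtot R)"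
    using exact_sum[of "Suc m" F] ibp[OF Good_coord Good_pd[OF gphi]] unfolding F_def by blast
  have eq: "eqU (\<lambda>v. \<phi> v - v 0 * P v) (\<lambda>v. \<Sum>j<Suc m. F j v)"
    unfolding eqU_def
  proof
    fix u assume u: "u \<in> U"
    have "Eop \<phi> u = (\<Sum>j<Suc m. u j * pd j \<phi> u)"
      unfolding Eop_def
    proof (rule suminf_finite)
      fix n assume "n \<notin> {..<Suc m}"
      then show "u n * pd n \<phi> u = 0" using pd_zero[OF dphi u, of n] by simp
    qed simp
    then have "\<phi> u = (\<Sum>j<Suc m. u j * pd j \<phi> u)" using Ephi[OF u] by simp
    moreover have "(\<Sum>j<Suc m. F j u) = (\<Sum>j<Suc m. u j * pd j \<phi> u) - u 0 * P u"
      unfolding F_def P_def EL_def Dn_coord by (simp add: sum_subtractf sum_distrib_left algebra_simps)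
    ultimately show "\<phi> u - u 0 * P u = (\<Sum>j<Suc m. F j u)" by simp
  qed
  have phiEq: "eqU \<phi> (\<lambda>v. v 0 * P v + Dtot R v)"
    using pd_at[OF eqU_trans[OF eq R(2)]] unfolding eqU_def by (auto simp: algebra_simps)
  obtain NP where dP: "dep NP P" using Good_dep[OF gP] by blast
  obtain NR where dR: "dep NR R" using Good_dep[OF R(1)] by blast
  define M where "M = max (max NP NR) m"
  define K2 where "K2 = Suc (Suc M)"
  have gQ1: "Good (\<lambda>v. v 0 * P v)" by (rule Good_mult[OF Good_coord gP])
  have gDR: "Good (Dtot R)" by (rule Good_Dtot[OF R(1)])
  have h1: "eqU (EL K2 \<phi>) (\<lambda>v. EL K2 (\<lambda>v. v 0 * P v) v + EL K2 (Dtot R) v)"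
    using eqU_trans[OF EL_cong[OF phiEq] EL_add[OF gQ1 gDR]] .
  have h2: "eqU (EL K2 (Dtot R)) (\<lambda>v. 0)"
    using eqU_trans[OF EL_stable[OF dep_Dtot[OF dR], of K2 "Suc (Suc NR)"] EL_Dtot[OF R(1) dR]]
    unfolding K2_def M_def by simp
  have h3: "eqU (EL K2 \<phi>) P"
    using EL_stable[OF dphi, of K2 "Suc m"] unfolding P_def K2_def M_def by simp
  define Y where "Y j = (\<lambda>v. v 0 * pd j P v)" for j
  have gY: "Good (Y j)" for j unfolding Y_def by (rule Good_mult[OF Good_coord Good_pd[OF gP]])
  have Q0: "(\<Sum>j<K2. (-1) ^ j * (Dtot ^^ j) (Y j) u) = 0" if u: "u \<in> U" for u
  proof -
    have trm: "(Dtot ^^ j) (pd j (\<lambda>v. v 0 * P v)) u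
        = (if j = 0 then 1 else 0) * (Dtot ^^ j) P u + (Dtot ^^ j) (Y j) u" for j
    proof -
      have "(Dtot ^^ j) (pd j (\<lambda>v. v 0 * P v)) u
          = (Dtot ^^ j) (\<lambda>v. (if j = 0 then 1 else 0) * P v + Y j v) u"
        using pd_at[OF Dn_cong[OF pd_mult[OF ldiff_coord Good_ldiff[OF gP]]] u]
        unfolding Y_def by (simp add: pd_coord)
      also have "\<dots> = (Dtot ^^ j) (\<lambda>v. (if j = 0 then 1 else 0) * P v) u + (Dtot ^^ j) (Y j) u"
        using pd_at[OF Dn_add[OF Good_cmult[OF gP] gY] u] .
      also have "\<dots> = (if j = 0 then 1 else 0) * (Dtot ^^ j) P u + (Dtot ^^ j) (Y j) u"
        using pd_at[OF Dn_cmult[OF gP] u] by simp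
      finally show ?thesis .
    qed
    have "P u = EL K2 \<phi> u" using pd_at[OF h3 u] by simp
    also have "\<dots> = EL K2 (\<lambda>v. v 0 * P v) u" using pd_at[OF h1 u] pd_at[OF h2 u] by simp
    also have "\<dots> = (\<Sum>j<K2. (-1) ^ j * ((if j = 0 then 1 else 0) * (Dtot ^^ j) P u))
        + (\<Sum>j<K2. (-1) ^ j * (Dtot ^^ j) (Y j) u)"
      unfolding EL_def trm by (simp add: distrib_left sum.distrib)
    also have "(\<Sum>j<K2. (-1) ^ j * ((if j = 0 then 1 else 0) * (Dtot ^^ j) P u))
        = (\<Sum>j<K2. if j = 0 then P u else 0)"
      by (rule sum.cong[OF refl]) simp
    also have "\<dots> = P u" unfolding K2_def by simp
    finally show ?thesis by simp
  qed
  have Lam: "Lambda_op \<phi> u = - P u" if u: "u \<in> U" for u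
  proof -
    have "Lambda_op \<phi> u = (\<Sum>j<Suc m. (-1) ^ (j + 1) * (Dtot ^^ j) (pd j \<phi>) u)"
      unfolding Lambda_op_def
    proof (rule suminf_finite)
      fix n assume "n \<notin> {..<Suc m}"
      then show "(-1) ^ (n + 1) * (Dtot ^^ n) (pd n \<phi>) u = 0"
        using Dn_pd_zero[OF dphi _ u, of n n] by simp
    qed simp
    also have "\<dots> = - P u" unfolding P_def EL_def by (simp add: sum_negf[symmetric])
    finally show ?thesis .
  qed
  have LamE: "eqU (Lambda_op \<phi>) (\<lambda>v. (-1) * P v)" unfolding eqU_def using Lam by simp
  show ?thesis
  proof
    fix u assume u: "u \<in> U"
    have tm: "(Dtot ^^ j) (\<lambda>v. v 0 * pd j (Lambda_op \<phi>) v) u = - (Dtot ^^ j) (Y j) u" for j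
    proof -
      have e: "eqU (\<lambda>v. v 0 * pd j (Lambda_op \<phi>) v) (\<lambda>v. (-1) * Y j v)"
        using eqU_trans[OF pd_cong[OF LamE] pd_cmult[OF Good_ldiff[OF gP]]]
        unfolding eqU_def Y_def by simp
      show ?thesis using pd_at[OF eqU_trans[OF Dn_cong[OF e] Dn_cmult[OF gY]] u] by simp
    qed
    have "Lop (Lambda_op \<phi>) u = (\<Sum>j<K2. (-1) ^ j * (Dtot ^^ j) (\<lambda>v. v 0 * pd j (Lambda_op \<phi>) v) u)"
      unfolding Lop_def
    proof (rule suminf_finite)
      fix n assume n: "n \<notin> {..<K2}"
      then have "NP < n" unfolding K2_def M_def by simp
      then have "eqU (Y n) (\<lambda>v. 0)" using pd_zero'[OF dP] unfolding Y_def eqU_def by auto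
      then have "(Dtot ^^ n) (Y n) u = 0" using pd_at[OF Dn_zero'[of "Y n" n] u] by simp
      then show "(-1) ^ n * (Dtot ^^ n) (\<lambda>v. v 0 * pd n (Lambda_op \<phi>) v) u = 0" using tm by simp
    qed simp
    also have "\<dots> = - (\<Sum>j<K2. (-1) ^ j * (Dtot ^^ j) (Y j) u)"
      using tm by (simp add: sum_negf[symmetric])
    also have "\<dots> = 0" using Q0[OF u] by simp
    finally show "Lop (Lambda_op \<phi>) u = 0" .
  qed
qed

end

theorem mainTheorem10:
  fixes m :: nat and U :: "(nat \<Rightarrow> real) set" and \<phi> :: jetfun
  assumes "open U"
    and "U \<subseteq> {u. u 0 > 0}"
    and "\<And>u v. (\<forall>k\<le>m. u k = v k) \<Longrightarrow> (u \<in> U \<longleftrightarrow> v \<in> U)"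
    and "\<And>u v. u \<in> U \<Longrightarrow> v \<in> U \<Longrightarrow> (\<forall>k\<le>m. u k = v k) \<Longrightarrow> \<phi> u = \<phi> v"
    and "smooth_on_jet U \<phi>"
    and "\<And>u. u \<in> U \<Longrightarrow> Eop \<phi> u = \<phi> u"
  shows "\<forall>u\<in>U. Lop (Lambda_op \<phi>) u = 0"
proof -
  interpret jet U m by unfold_locales (rule assms(1), rule assms(3))
  have d: "dep m \<phi>" unfolding dep_def by (intro conjI le_refl ballI impI) (rule assms(4))
  show ?thesis by (rule main_loc[OF d assms(5) assms(6)])
qed

end
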